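(* Let $q$ be a prime power, $n\ge 1$, and $L_q^n$ the lattice of all subspaces of $\mathbb{F}_q^n$ ordered by inclusion and ranked by dimension. Then $\mathcal{M}(L_q^n,-1)=0$.
   Context: For a finite ranked poset $\mathcal{P}$, $\mathrm{rk}(\mathcal{P})$ is the maximum rank and $\rho(x,y,z)=3\,\mathrm{rk}(\mathcal{P})-\mathrm{rk}(x)-\mathrm{rk}(y)-\mathrm{rk}(z)$. Let $\delta_3(x,y,z)=1$ if $x=y=z$ and $0$ otherwise, and $J$ the unique integer-valued function on triples $x\le y\le z$ with $\sum_{x\le a\le y\le b\le z}J(a,y,b)=\delta_3(x,y,z)$ for all $x\le y\le z$. Then $\mathcal{M}(\mathcal{P},t)=\sum_{x\le y\le z}J(x,y,z)\,t^{\rho(x,y,z)}$. *)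

theory Defs
  imports "HOL-Analysis.Analysis"
begin

text \<open>A finite ranked poset is given by a carrier P, an order le on P and a rank function rk.\<close>

definition delta3 :: "'b \<Rightarrow> 'b \<Rightarrow> 'b \<Rightarrow> int" where
  "delta3 x y z = (if x = y \<and> y = z then 1 else 0)"

text \<open>The unique integer-valued function J on triples x \<le> y \<le> z of P with
  sum over x \<le> a \<le> y \<le> b \<le> z of J a y b = delta3 x y z.  Outside such triples
  J is normalised to 0 (irrelevant values).\<close>

definition Jfun :: "'b set \<Rightarrow> ('b \<Rightarrow> 'b \<Rightarrow> bool) \<Rightarrow> 'b \<Rightarrow> 'b \<Rightarrow> 'b \<Rightarrow> int" where
  "Jfun P le = (THE J.
     (\<forall>x\<in>P. \<forall>y\<in>P. \<forall>z\<in>P. le x y \<and> le y z \<longrightarrow>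
        (\<Sum>(a,b)\<in>{(a,b). a \<in> P \<and> b \<in> P \<and> le x a \<and> le a y \<and> le y b \<and> le b z}. J a y b)
          = delta3 x y z) \<and>
     (\<forall>x y z. \<not> (x \<in> P \<and> y \<in> P \<and> z \<in> P \<and> le x y \<and> le y z) \<longrightarrow> J x y z = 0))"

definition maxrank :: "'b set \<Rightarrow> ('b \<Rightarrow> nat) \<Rightarrow> nat" where
  "maxrank P rk = Max (rk ` P)"

definition rho :: "'b set \<Rightarrow> ('b \<Rightarrow> nat) \<Rightarrow> 'b \<Rightarrow> 'b \<Rightarrow> 'b \<Rightarrow> int" where
  "rho P rk x y z = 3 * int (maxrank P rk) - int (rk x) - int (rk y) - int (rk z)"

text \<open>The polynomial M(P,t), evaluated at t (rho is nonnegative on P).\<close>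
definition Mpoly :: "'b set \<Rightarrow> ('b \<Rightarrow> 'b \<Rightarrow> bool) \<Rightarrow> ('b \<Rightarrow> nat) \<Rightarrow> 'c::comm_ring_1 \<Rightarrow> 'c" where
  "Mpoly P le rk t =
     (\<Sum>(x,y,z)\<in>{(x,y,z). x \<in> P \<and> y \<in> P \<and> z \<in> P \<and> le x y \<and> le y z}.
        of_int (Jfun P le x y z) * t ^ nat (rho P rk x y z))"

text \<open>Subspace lattice of F^n, F a finite field, n = CARD('n).\<close>
definition subspace_lattice :: "('a::{field,finite} ^ 'n) set set" where
  "subspace_lattice = {S. vec.subspace S}"

end

theory Submission
  imports Defs
begin


definition dotv :: "'a::field^'n \<Rightarrow> 'a^'n \<Rightarrow> 'a" where
  "dotv x y = (\<Sum>i\<in>UNIV. x$i * y$i)"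

definition perp :: "('a::field^'n) set \<Rightarrow> ('a^'n) set" where
  "perp S = {x. \<forall>y\<in>S. dotv x y = 0}"

lemma dotv_sym: "dotv x y = dotv y x"
  unfolding dotv_def by (simp add: mult.commute)

lemma dotv_add: "dotv x (y + z) = dotv x y + dotv x z"
  unfolding dotv_def by (simp add: distrib_left sum.distrib)

lemma dotv_scale: "dotv x (c *s y) = c * dotv x y"
  unfolding dotv_def by (simp add: sum_distrib_left algebra_simps)

lemma dotv_addl: "dotv (y + z) x = dotv y x + dotv z x"
  by (metis dotv_sym dotv_add)

lemma dotv_scalel: "dotv (c *s y) x = c * dotv y x"
  by (metis dotv_sym dotv_scale)

lemma dotv_zero: "dotv 0 y = 0"
  unfolding dotv_def by simp

lemma subspace_perp: "vec.subspace (perp S)"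
  unfolding vec.subspace_def perp_def
  by (auto simp: dotv_addl dotv_scalel dotv_zero)

lemma perp_anti: "S \<subseteq> T \<Longrightarrow> perp T \<subseteq> perp S"
  unfolding perp_def by auto

lemma perp_perp_sup: "S \<subseteq> perp (perp S)"
  unfolding perp_def by (auto simp: dotv_sym)

lemma perp_span: "perp (vec.span B) = perp B"
proof
  show "perp (vec.span B) \<subseteq> perp B" by (rule perp_anti) (rule vec.span_superset)
  show "perp B \<subseteq> perp (vec.span B)"
  proof
    fix x assume x: "x \<in> perp B"
    have sub: "vec.subspace {y. dotv x y = 0}"
      unfolding vec.subspace_def by (auto simp: dotv_addl dotv_scalel dotv_zero dotv_sym[of x])
    have "B \<subseteq> {y. dotv x y = 0}" using x unfolding perp_def by auto
    then have "vec.span B \<subseteq> {y. dotv x y = 0}" using sub by (rule vec.span_minimal)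
    then show "x \<in> perp (vec.span B)" unfolding perp_def by auto
  qed
qed

lemma dim_perp:
  fixes S :: "('a::field^'n) set"
  assumes S: "vec.subspace S"
  shows "vec.dim (perp S) + vec.dim S = CARD('n)"
proof -
  obtain B where B: "B \<subseteq> S" "vec.independent B" "S \<subseteq> vec.span B" "card B = vec.dim S"
    using vec.basis_exists by blast
  obtain C where C: "B \<subseteq> C" "vec.independent C" "UNIV \<subseteq> vec.span C"
    using vec.maximal_independent_subset_extend[of B UNIV] B(2) by auto
  have fC: "finite C" using C(2) vec.independent_explicit by blast
  have cC: "card C = CARD('n)"
    using vec.basis_card_eq_dim[of C UNIV] C vec_dim_card by auto
  obtain \<sigma> where \<sigma>: "bij_betw \<sigma> (UNIV::'n set) C"
    using finite_same_card_bij[of "UNIV::'n set" C] fC cC by auto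
  define I where "I = {i. \<sigma> i \<in> B}"
  have cI: "card I = card B"
  proof -
    have "bij_betw \<sigma> I B"
      using \<sigma> C(1) unfolding I_def bij_betw_def inj_on_def by auto
    then show ?thesis by (rule bij_betw_same_card)
  qed
  define M :: "'a^'n^'n" where "M = (\<chi> i. \<sigma> i)"
  have rows: "row i M = \<sigma> i" for i unfolding M_def row_def by (simp add: vec_lambda_eta)
  have indep: "\<forall>c. (\<Sum>i\<in>UNIV. c i *s row i M) = 0 \<longrightarrow> (\<forall>i. c i = 0)"
  proof (intro allI impI)
    fix c :: "'n \<Rightarrow> 'a" and i
    assume h: "(\<Sum>i\<in>UNIV. c i *s row i M) = 0"
    define c' where "c' = (\<lambda>v. c (the_inv_into UNIV \<sigma> v))"
    have "(\<Sum>v\<in>C. c' v *s v) = (\<Sum>i\<in>UNIV. c' (\<sigma> i) *s \<sigma> i)"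
      using sum.reindex_bij_betw[OF \<sigma>, of "\<lambda>v. c' v *s v"] by simp
    also have "\<dots> = (\<Sum>i\<in>UNIV. c i *s row i M)"
      unfolding c'_def rows
      using \<sigma> by (simp add: bij_betw_def the_inv_into_f_f)
    finally have "(\<Sum>v\<in>C. c' v *s v) = 0" using h by simp
    then have "c' (\<sigma> i) = 0" using C(2) vec.independent_explicit \<sigma>
      by (metis bij_betwE iso_tuple_UNIV_I)
    then show "c i = 0" unfolding c'_def using \<sigma> by (simp add: bij_betw_def the_inv_into_f_f)
  qed
  have inv: "invertible M"
    unfolding invertible_right_inverse matrix_right_invertible_independent_rows using indep by blast
  have bij: "bij ((*v) M)" using inv invertible_eq_bij by blast
  define E :: "('a^'n) set" where "E = {y. \<forall>i. i \<notin> -I \<longrightarrow> y$i = 0}"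
  have dimE: "vec.dim E = CARD('n) - card I"
    unfolding E_def dim_substandard_cart by (simp add: Compl_eq_Diff_UNIV card_Diff_subset)
  have Mv: "(M *v x)$i = dotv x (\<sigma> i)" for x i
    unfolding M_def dotv_def matrix_vector_mult_def by (simp add: mult.commute)
  have pS: "perp S = perp B"
  proof -
    have "vec.span B = S"
      using B S vec.span_minimal[of B S] vec.span_eq_iff by blast
    then show ?thesis using perp_span by metis
  qed
  have pre: "perp S = (*v) M -` E"
  proof -
    have "x \<in> perp B \<longleftrightarrow> (\<forall>i\<in>I. (M *v x)$i = 0)" for x
      unfolding perp_def Mv I_def using \<sigma> C(1)
      by (auto simp: bij_betw_def)
    then show ?thesis unfolding pS E_def by auto
  qed
  have img: "(*v) M ` perp S = E"
    unfolding pre using bij by (simp add: bij_def surj_image_vimage_eq)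
  have "vec.dim ((*v) M ` perp S) = vec.dim (perp S)"
    by (rule vec.dim_image_eq) (use bij in \<open>auto simp: bij_def intro: inj_on_subset\<close>)
  then have "vec.dim (perp S) = CARD('n) - card I" using img dimE by simp
  moreover have "card I \<le> CARD('n)" by (simp add: card_mono)
  ultimately show ?thesis using cI B(4) by simp
qed

lemma perp_perp:
  fixes S :: "('a::field^'n) set"
  assumes S: "vec.subspace S"
  shows "perp (perp S) = S"
proof -
  have "vec.dim (perp (perp S)) + vec.dim (perp S) = CARD('n)"
    using dim_perp[of "perp S"] subspace_perp by blast
  then have "vec.dim (perp (perp S)) \<le> vec.dim S" using dim_perp[OF S] by simp
  then show ?thesis using vec.subspace_dim_equal[OF S subspace_perp perp_perp_sup] by simp
qed



definition betw :: "('a::field^'n) set \<Rightarrow> ('a^'n) set \<Rightarrow> ('a^'n) set set" where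
  "betw u v = {c. vec.subspace c \<and> u \<subseteq> c \<and> c \<subseteq> v}"

lemma persp:
  fixes u v :: "('a::field^'n) set"
  assumes u: "vec.subspace u" and v: "vec.subspace v" and uv: "u \<subseteq> v"
  shows "\<exists>W::('a^'n) set. vec.subspace W \<and> vec.dim W + vec.dim u = vec.dim v \<and>
     (\<forall>g::nat\<Rightarrow>int. (\<Sum>c\<in>betw u v. g (vec.dim c)) = (\<Sum>d\<in>betw {0} W. g (vec.dim u + vec.dim d)))"
proof -
  obtain B where B: "B \<subseteq> u" "vec.independent B" "u \<subseteq> vec.span B" "card B = vec.dim u"
    using vec.basis_exists by blast
  obtain C where C: "B \<subseteq> C" "C \<subseteq> v" "vec.independent C" "v \<subseteq> vec.span C"
    using vec.maximal_independent_subset_extend[of B v] B(2) B(1) uv by blast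
  have fC: "finite C" using C(3) vec.independent_explicit by blast
  have cC: "card C = vec.dim v" using vec.basis_card_eq_dim[of C v] C by auto
  define W where "W = vec.span (C - B)"
  have sW: "vec.subspace W" unfolding W_def by simp
  have indCB: "vec.independent (C - B)" using C(3) vec.independent_mono by blast
  have dW: "vec.dim W = card C - card B"
    unfolding W_def vec.dim_span_eq_card_independent[OF indCB]
    using fC C(1) by (simp add: card_Diff_subset finite_subset)
  have cBC: "card B \<le> card C" using fC C(1) card_mono by blast
  have spB: "vec.span B = u" using B u vec.span_minimal[of B u] vec.span_eq_iff by blast
  have Wv: "W \<subseteq> v" unfolding W_def using C(2) v vec.span_minimal[of "C - B" v] by blast
  have sumv: "{x + y |x y. x \<in> u \<and> y \<in> W} = v"
  proof
    show "{x + y |x y. x \<in> u \<and> y \<in> W} \<subseteq> v"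
      using uv Wv v by (auto intro: vec.subspace_add)
    have "vec.span C = vec.span (B \<union> (C - B))" using C(1) by (simp add: Un_absorb1)
    then have "vec.span C = {x + y |x y. x \<in> u \<and> y \<in> W}"
      unfolding vec.span_Un spB W_def by simp
    then show "v \<subseteq> {x + y |x y. x \<in> u \<and> y \<in> W}" using C(4) by simp
  qed
  have "vec.dim v + vec.dim (u \<inter> W) = vec.dim u + vec.dim W"
    using vec.dim_sums_Int[OF u sW] sumv by simp
  then have "vec.dim (u \<inter> W) = 0" using dW cC B(4) cBC by simp
  then have uW: "u \<inter> W \<subseteq> {0}" using vec.dim_eq_0[of "u \<inter> W"] by simp
  define j where "j = (\<lambda>d::('a^'n) set. {x + y |x y. x \<in> u \<and> y \<in> d})"
  have dimj: "vec.dim (j d) = vec.dim u + vec.dim d" if d: "d \<in> betw {0} W" for d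
  proof -
    have "vec.dim (j d) + vec.dim (u \<inter> d) = vec.dim u + vec.dim d"
      unfolding j_def using vec.dim_sums_Int[OF u] d by (simp add: betw_def)
    moreover have "vec.dim (u \<inter> d) = 0" using uW d vec.dim_eq_0 by (auto simp: betw_def)
    ultimately show ?thesis by simp
  qed
  have key: "(\<Sum>c\<in>betw u v. g (vec.dim c)) = (\<Sum>d\<in>betw {0} W. g (vec.dim u + vec.dim d))" for g :: "nat \<Rightarrow> int"
  proof (rule sum.reindex_bij_witness[where j = "\<lambda>c. c \<inter> W" and i = j])
    fix c assume c: "c \<in> betw u v"
    show "j (c \<inter> W) = c"
    proof
      show "j (c \<inter> W) \<subseteq> c" unfolding j_def using c by (auto simp: betw_def intro: vec.subspace_add)
      show "c \<subseteq> j (c \<inter> W)"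
      proof
        fix z assume z: "z \<in> c"
        then have "z \<in> v" using c by (auto simp: betw_def)
        then obtain x y where xy: "z = x + y" "x \<in> u" "y \<in> W" using sumv by blast
        have "y = z - x" using xy by simp
        then have "y \<in> c" using z xy(2) c vec.subspace_diff by (auto simp: betw_def)
        then show "z \<in> j (c \<inter> W)" unfolding j_def using xy by blast
      qed
    qed
    show "c \<inter> W \<in> betw {0} W" using c sW vec.subspace_inter vec.subspace_0 by (auto simp: betw_def)
    show "g (vec.dim u + vec.dim (c \<inter> W)) = g (vec.dim c)"
    proof -
      have "c \<inter> W \<in> betw {0} W" using c sW vec.subspace_inter vec.subspace_0 by (auto simp: betw_def)
      moreover have "j (c \<inter> W) = c" by fact
      ultimately show ?thesis using dimj by metis
    qed
  next
    fix d assume d: "d \<in> betw {0} W"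
    show "j d \<inter> W = d"
    proof
      show "j d \<inter> W \<subseteq> d"
      proof
        fix z assume z: "z \<in> j d \<inter> W"
        then obtain x y where xy: "z = x + y" "x \<in> u" "y \<in> d" unfolding j_def by blast
        have "x = z - y" using xy by simp
        moreover have "y \<in> W" using xy d by (auto simp: betw_def)
        ultimately have "x \<in> W" using z sW vec.subspace_diff by blast
        then have "x = 0" using uW xy by auto
        then show "z \<in> d" using xy by simp
      qed
      show "d \<subseteq> j d \<inter> W"
        unfolding j_def using d vec.subspace_0[OF u] by (auto simp: betw_def) (metis add_0)
    qed
    show "j d \<in> betw u v"
      unfolding betw_def j_def
    proof (intro CollectI conjI)
      show "vec.subspace {x + y |x y. x \<in> u \<and> y \<in> d}" using vec.subspace_sums[OF u] d by (auto simp: betw_def)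
      show "u \<subseteq> {x + y |x y. x \<in> u \<and> y \<in> d}"
      proof
        fix x assume x: "x \<in> u"
        have "0 \<in> d" using d vec.subspace_0 by (auto simp: betw_def)
        moreover have "x = x + 0" by simp
        ultimately show "x \<in> {x + y |x y. x \<in> u \<and> y \<in> d}" using x by blast
      qed
      show "{x + y |x y. x \<in> u \<and> y \<in> d} \<subseteq> v" using d uv Wv v by (auto simp: betw_def intro!: vec.subspace_add)
    qed
  qed
  have dd: "vec.dim W + vec.dim u = vec.dim v" using dW cC B(4) cBC by simp
  show ?thesis
  proof (intro exI[where x=W] conjI allI)
    show "vec.subspace W" by (rule sW)
    show "vec.dim W + vec.dim u = vec.dim v" by (rule dd)
    fix g :: "nat \<Rightarrow> int"
    show "(\<Sum>c\<in>betw u v. g (vec.dim c)) = (\<Sum>d\<in>betw {0} W. g (vec.dim u + vec.dim d))" by (rule key)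
  qed
qed



lemma transport:
  fixes W W' :: "('a::field^'n) set"
  assumes W: "vec.subspace W" and W': "vec.subspace W'" and d: "vec.dim W = vec.dim W'"
  shows "(\<Sum>c\<in>betw {0} W. g (vec.dim c)) = (\<Sum>c\<in>betw {0} W'. g (vec.dim c))"
proof -
  obtain B where B: "B \<subseteq> W" "vec.independent B" "W \<subseteq> vec.span B" "card B = vec.dim W"
    using vec.basis_exists by blast
  obtain C where C: "C \<subseteq> W'" "vec.independent C" "W' \<subseteq> vec.span C" "card C = vec.dim W'"
    using vec.basis_exists by blast
  obtain f where f: "Vector_Spaces.linear (*s) (*s) f" "f ` W = W'" "inj_on f W"
    using vec.basis_to_basis_subspace_isomorphism[OF W W' d B C] by blast
  show ?thesis
  proof (rule sum.reindex_bij_witness[where j = "\<lambda>c. f ` c" and i = "\<lambda>c. W \<inter> f -` c"])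
    fix c assume c: "c \<in> betw {0} W"
    then have cW: "c \<subseteq> W" and sc: "vec.subspace c" by (auto simp: betw_def)
    show "W \<inter> f -` f ` c = c"
      using cW f(3) by (auto simp: inj_on_def) 
    show "f ` c \<in> betw {0} W'"
      unfolding betw_def using cW f vec.linear_subspace_image[OF f(1) sc] vec.subspace_0 by auto
    have spc: "vec.span c = c" using sc vec.span_eq_iff by blast
    have "vec.dim (f ` c) = vec.dim c"
      by (rule vec.dim_image_eq[OF f(1)]) (unfold spc, rule inj_on_subset[OF f(3) cW])
    then show "g (vec.dim (f ` c)) = g (vec.dim c)" by simp
  next
    fix c assume c: "c \<in> betw {0} W'"
    then have cW: "c \<subseteq> W'" and sc: "vec.subspace c" by (auto simp: betw_def)
    show "f ` (W \<inter> f -` c) = c" using cW f(2) by blast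
    show "W \<inter> f -` c \<in> betw {0} W"
      unfolding betw_def using vec.subspace_inter[OF W vec.linear_subspace_vimage[OF f(1) sc]]
        vec.subspace_0 by auto
  qed
qed

lemma perp_sum:
  fixes W :: "('a::field^'n) set"
  assumes W: "vec.subspace W"
  shows "(\<Sum>c\<in>betw {0} W. g (vec.dim c)) = (\<Sum>c\<in>betw (perp W) UNIV. g (CARD('n) - vec.dim c))"
proof (rule sum.reindex_bij_witness[where j = perp and i = perp])
  fix c assume c: "c \<in> betw {0} W"
  then have sc: "vec.subspace c" and cW: "c \<subseteq> W" by (auto simp: betw_def)
  show "perp (perp c) = c" using perp_perp[OF sc] .
  show "perp c \<in> betw (perp W) UNIV" unfolding betw_def using subspace_perp perp_anti[OF cW] by auto
  have "CARD('n) - vec.dim (perp c) = vec.dim c" using dim_perp[OF sc] by linarith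
  then show "g (CARD('n) - vec.dim (perp c)) = g (vec.dim c)" by simp
next
  fix c assume c: "c \<in> betw (perp W) UNIV"
  then have sc: "vec.subspace c" and cW: "perp W \<subseteq> c" by (auto simp: betw_def)
  show "perp (perp c) = c" using perp_perp[OF sc] .
  have "perp c \<subseteq> W" using perp_anti[OF cW] perp_perp[OF W] by simp
  then show "perp c \<in> betw {0} W" unfolding betw_def using subspace_perp vec.subspace_0 by auto
qed

lemma odd_sum_zero:
  fixes W :: "('a::field^'n) set"
  assumes W: "vec.subspace W" and m: "odd (vec.dim W)"
  shows "(\<Sum>c\<in>betw {0} W. (-1::int) ^ vec.dim c) = 0"
proof -
  let ?n = "CARD('n)"
  let ?m = "vec.dim W"
  have dp: "vec.dim (perp W) + ?m = ?n" using dim_perp[OF W] .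
  obtain W2 :: "('a^'n) set" where W2: "vec.subspace W2" "vec.dim W2 + vec.dim (perp W) = vec.dim (UNIV::('a^'n) set)"
    and eq0: "\<forall>g::nat\<Rightarrow>int. (\<Sum>c\<in>betw (perp W) (UNIV::('a^'n) set). g (vec.dim c))
       = (\<Sum>d\<in>betw {0} W2. g (vec.dim (perp W) + vec.dim d))"
    using persp[OF subspace_perp vec.subspace_UNIV subset_UNIV, of W] by blast
  note eq = eq0[rule_format]
  have dW2: "vec.dim W2 = ?m" using W2(2) dp vec_dim_card[where 'a='a and 'n='n] by simp
  have "(\<Sum>c\<in>betw {0} W. (-1::int) ^ vec.dim c)
      = (\<Sum>c\<in>betw (perp W) UNIV. (-1::int) ^ (?n - vec.dim c))"
    using perp_sum[OF W] .
  also have "\<dots> = (\<Sum>d\<in>betw {0} W2. (-1::int) ^ (?n - (vec.dim (perp W) + vec.dim d)))"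
    using eq[of "\<lambda>k. (-1::int) ^ (?n - k)"] .
  also have "\<dots> = (\<Sum>d\<in>betw {0} W2. (-1::int) ^ (?m - vec.dim d))"
  proof -
    have h: "\<And>x. ?n - (vec.dim (perp W) + x) = ?m - x" using dp by linarith
    show ?thesis by (simp add: h)
  qed
  also have "\<dots> = (\<Sum>d\<in>betw {0} W. (-1::int) ^ (?m - vec.dim d))"
    using transport[OF W2(1) W dW2] .
  also have "\<dots> = (\<Sum>d\<in>betw {0} W. - ((-1::int) ^ vec.dim d))"
  proof (intro sum.cong refl)
    fix d assume d: "d \<in> betw {0} W"
    then have "vec.dim d \<le> ?m" using vec.dim_subset by (auto simp: betw_def)
    then obtain k where k: "?m = vec.dim d + k" using le_Suc_ex by blast
    then have "odd (vec.dim d + k)" using m by simp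
    then have "(-1::int) ^ k = - ((-1) ^ vec.dim d)"
      by (auto simp: minus_one_power_iff)
    then show "(-1::int) ^ (?m - vec.dim d) = - ((-1::int) ^ vec.dim d)" using k by simp
  qed
  also have "\<dots> = - (\<Sum>d\<in>betw {0} W. (-1::int) ^ vec.dim d)" by (simp add: sum_negf)
  finally show ?thesis by simp
qed

lemma parity_sum:
  fixes u v :: "('a::field^'n) set"
  assumes u: "vec.subspace u" and v: "vec.subspace v" and uv: "u \<subseteq> v"
    and par: "(-1::int) ^ vec.dim u \<noteq> (-1) ^ vec.dim v"
  shows "(\<Sum>c\<in>betw u v. (-1::int) ^ vec.dim c) = 0"
proof -
  obtain W :: "('a^'n) set" where W: "vec.subspace W" "vec.dim W + vec.dim u = vec.dim v"
    and eq0: "\<forall>g::nat\<Rightarrow>int. (\<Sum>c\<in>betw u v. g (vec.dim c)) = (\<Sum>d\<in>betw {0} W. g (vec.dim u + vec.dim d))"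
    using persp[OF u v uv] by blast
  note eq = eq0[rule_format]
  have "odd (vec.dim W)"
  proof
    assume e: "even (vec.dim W)"
    have "vec.dim v = vec.dim W + vec.dim u" using W(2) by simp
    then have "even (vec.dim v) = even (vec.dim u)" using e by simp
    then show False using par by (simp add: minus_one_power_iff)
  qed
  have "(\<Sum>c\<in>betw u v. (-1::int) ^ vec.dim c) = (\<Sum>d\<in>betw {0} W. (-1::int) ^ (vec.dim u + vec.dim d))"
    using eq .
  also have "\<dots> = (-1) ^ vec.dim u * (\<Sum>d\<in>betw {0} W. (-1::int) ^ vec.dim d)"
    by (simp add: power_add sum_distrib_left)
  also have "\<dots> = 0" using odd_sum_zero[OF W(1) \<open>odd (vec.dim W)\<close>] by simp
  finally show ?thesis .
qed



definition ivl :: "'c set set \<Rightarrow> 'c set \<Rightarrow> 'c set \<Rightarrow> 'c set set" where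
  "ivl P u w = {c \<in> P. u \<subseteq> c \<and> c \<subseteq> w}"

definition conv :: "'c set set \<Rightarrow> ('c set \<Rightarrow> 'c set \<Rightarrow> int) \<Rightarrow> ('c set \<Rightarrow> 'c set \<Rightarrow> int) \<Rightarrow> 'c set \<Rightarrow> 'c set \<Rightarrow> int" where
  "conv P f g u w = (\<Sum>c\<in>ivl P u w. f u c * g c w)"

definition one :: "'c set \<Rightarrow> 'c set \<Rightarrow> int" where
  "one u w = (if u = w then 1 else 0)"

lemma psub_card_lt:
  fixes u c w :: "'c::finite set"
  assumes "u \<subseteq> c" "c \<subset> w"
  shows "card (c - u) < card (w - u)"
proof (rule psubset_card_mono)
  show "finite (w - u)" by simp
  show "c - u \<subset> w - u" using assms by blast
qed

lemma psub_card_lt2: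
  fixes u c w :: "'c::finite set"
  assumes "u \<subset> c" "c \<subseteq> w"
  shows "card (w - c) < card (w - u)"
proof (rule psubset_card_mono)
  show "finite (w - u)" by simp
  show "w - c \<subset> w - u" using assms by blast
qed

function mu :: "'c::finite set set \<Rightarrow> 'c set \<Rightarrow> 'c set \<Rightarrow> int" where
  "mu P u w = (if u = w then 1 else if u \<subseteq> w then - (\<Sum>c\<in>{c\<in>P. u \<subseteq> c \<and> c \<subset> w}. mu P u c) else 0)"
  by auto
termination
  by (relation "Wellfounded.measure (\<lambda>(P,u,w). card (w - u))") (auto intro: psub_card_lt)

function nu :: "'c::finite set set \<Rightarrow> 'c set \<Rightarrow> 'c set \<Rightarrow> int" where
  "nu P u w = (if u = w then 1 else if u \<subseteq> w then - (\<Sum>c\<in>{c\<in>P. u \<subset> c \<and> c \<subseteq> w}. nu P c w) else 0)"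
  by auto
termination
  by (relation "Wellfounded.measure (\<lambda>(P,u,w). card (w - u))") (auto intro: psub_card_lt2)

declare mu.simps[simp del] nu.simps[simp del]

lemma mu_R:
  fixes P :: "'c::finite set set"
  assumes "u \<in> P" "w \<in> P" "u \<subseteq> w"
  shows "conv P (mu P) (\<lambda>_ _. 1) u w = one u w"
proof (cases "u = w")
  case True
  then have "ivl P u w = {u}" using assms unfolding ivl_def by auto
  then show ?thesis using True unfolding conv_def one_def by (simp add: mu.simps)
next
  case False
  have fin: "finite {c\<in>P. u \<subseteq> c \<and> c \<subset> w}" by simp
  have "ivl P u w = insert w {c\<in>P. u \<subseteq> c \<and> c \<subset> w}" using assms unfolding ivl_def by auto
  then have "conv P (mu P) (\<lambda>_ _. 1) u w = mu P u w + (\<Sum>c\<in>{c\<in>P. u \<subseteq> c \<and> c \<subset> w}. mu P u c)"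
    unfolding conv_def using fin by simp
  also have "\<dots> = 0" using False assms by (subst mu.simps) simp
  finally show ?thesis using False by (simp add: one_def)
qed

lemma nu_L:
  fixes P :: "'c::finite set set"
  assumes "u \<in> P" "w \<in> P" "u \<subseteq> w"
  shows "conv P (\<lambda>_ _. 1) (nu P) u w = one u w"
proof (cases "u = w")
  case True
  then have "ivl P u w = {u}" using assms unfolding ivl_def by auto
  then show ?thesis using True unfolding conv_def one_def by (simp add: nu.simps)
next
  case False
  have fin: "finite {c\<in>P. u \<subset> c \<and> c \<subseteq> w}" by simp
  have "ivl P u w = insert u {c\<in>P. u \<subset> c \<and> c \<subseteq> w}" using assms unfolding ivl_def by auto
  then have "conv P (\<lambda>_ _. 1) (nu P) u w = nu P u w + (\<Sum>c\<in>{c\<in>P. u \<subset> c \<and> c \<subseteq> w}. nu P c w)"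
    unfolding conv_def using fin by simp
  also have "\<dots> = 0" using False assms by (subst nu.simps) simp
  finally show ?thesis using False by (simp add: one_def)
qed

lemma conv_assoc:
  fixes P :: "'c::finite set set"
  shows "conv P (conv P f g) h u w = conv P f (conv P g h) u w"
proof -
  have "conv P (conv P f g) h u w = (\<Sum>d\<in>ivl P u w. \<Sum>c\<in>ivl P u d. f u c * g c d * h d w)"
    unfolding conv_def by (simp add: sum_distrib_right)
  also have "\<dots> = (\<Sum>d\<in>ivl P u w. \<Sum>c\<in>{c. c \<in> ivl P u w \<and> c \<subseteq> d}. f u c * g c d * h d w)"
    by (intro sum.cong refl) (auto simp: ivl_def)
  also have "\<dots> = (\<Sum>c\<in>ivl P u w. \<Sum>d\<in>{d. d \<in> ivl P u w \<and> c \<subseteq> d}. f u c * g c d * h d w)"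
    by (rule sum.swap_restrict) simp_all
  also have "\<dots> = (\<Sum>c\<in>ivl P u w. \<Sum>d\<in>ivl P c w. f u c * g c d * h d w)"
    by (intro sum.cong refl) (auto simp: ivl_def)
  also have "\<dots> = conv P f (conv P g h) u w"
    unfolding conv_def by (simp add: sum_distrib_left mult.assoc)
  finally show ?thesis .
qed

lemma conv_cong:
  assumes "\<And>c. c \<in> ivl P u w \<Longrightarrow> f u c = f' u c"
    and "\<And>c. c \<in> ivl P u w \<Longrightarrow> g c w = g' c w"
  shows "conv P f g u w = conv P f' g' u w"
  unfolding conv_def using assms by (intro sum.cong refl) auto

lemma conv_one_right:
  fixes P :: "'c::finite set set"
  assumes "w \<in> P" "u \<subseteq> w"
  shows "conv P f one u w = f u w"
proof -
  have "conv P f one u w = (\<Sum>c\<in>ivl P u w. if c = w then f u c else 0)"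
    unfolding conv_def one_def by (intro sum.cong refl) auto
  also have "\<dots> = f u w" using assms by (simp add: ivl_def)
  finally show ?thesis .
qed

lemma conv_one_left:
  fixes P :: "'c::finite set set"
  assumes "u \<in> P" "u \<subseteq> w"
  shows "conv P one f u w = f u w"
proof -
  have "conv P one f u w = (\<Sum>c\<in>ivl P u w. if u = c then f c w else 0)"
    unfolding conv_def one_def by (intro sum.cong refl) auto
  also have "\<dots> = f u w" using assms by (simp add: ivl_def)
  finally show ?thesis .
qed

lemma mu_eq_nu:
  fixes P :: "'c::finite set set"
  assumes u: "u \<in> P" and w: "w \<in> P" and uw: "u \<subseteq> w"
  shows "mu P u w = nu P u w"
proof -
  have "mu P u w = conv P (mu P) one u w" using conv_one_right[OF w uw] by simp
  also have "\<dots> = conv P (mu P) (conv P (\<lambda>_ _. 1) (nu P)) u w"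
    by (rule conv_cong) (auto simp: ivl_def w nu_L)
  also have "\<dots> = conv P (conv P (mu P) (\<lambda>_ _. 1)) (nu P) u w" by (simp add: conv_assoc)
  also have "\<dots> = conv P one (nu P) u w"
    by (rule conv_cong) (auto simp: ivl_def u mu_R)
  also have "\<dots> = nu P u w" using conv_one_left[OF u uw] .
  finally show ?thesis .
qed

lemma mu_L:
  fixes P :: "'c::finite set set"
  assumes u: "u \<in> P" and w: "w \<in> P" and uw: "u \<subseteq> w"
  shows "conv P (\<lambda>_ _. 1) (mu P) u w = one u w"
proof -
  have "conv P (\<lambda>_ _. 1) (mu P) u w = conv P (\<lambda>_ _. 1) (nu P) u w"
    by (rule conv_cong) (auto simp: ivl_def w mu_eq_nu)
  then show ?thesis using nu_L[OF assms] by simp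
qed

lemma comm_mu:
  fixes P :: "'c::finite set set" and sg :: "'c set \<Rightarrow> int"
  assumes par: "\<And>u w. u \<in> P \<Longrightarrow> w \<in> P \<Longrightarrow> u \<subseteq> w \<Longrightarrow> sg u \<noteq> sg w \<Longrightarrow> (\<Sum>c\<in>ivl P u w. sg c) = 0"
    and u: "u \<in> P" and w: "w \<in> P" and uw: "u \<subseteq> w"
  shows "conv P (mu P) (\<lambda>a b. sg a * sg b) u w = conv P (\<lambda>a b. sg a * sg b) (mu P) u w"
proof -
  let ?Z = "\<lambda>_ _. 1::int"
  let ?T = "\<lambda>a b. sg a * sg b"
  have comm: "conv P ?Z ?T c d = conv P ?T ?Z c d" if "c \<in> P" "d \<in> P" "c \<subseteq> d" for c d
  proof (cases "sg c = sg d")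
    case True
    then show ?thesis unfolding conv_def by (intro sum.cong refl) (simp add: mult.commute)
  next
    case False
    have "conv P ?Z ?T c d = sg d * (\<Sum>e\<in>ivl P c d. sg e)"
      unfolding conv_def by (simp add: sum_distrib_left mult.commute)
    moreover have "conv P ?T ?Z c d = sg c * (\<Sum>e\<in>ivl P c d. sg e)"
      unfolding conv_def by (simp add: sum_distrib_left)
    ultimately show ?thesis using par[OF that False] by simp
  qed
  have inner: "conv P ?Z (conv P ?T (mu P)) c w = ?T c w" if c: "c \<in> ivl P u w" for c
  proof -
    have cP: "c \<in> P" "c \<subseteq> w" using c by (auto simp: ivl_def)
    have "conv P ?Z (conv P ?T (mu P)) c w = conv P (conv P ?Z ?T) (mu P) c w"
      by (simp add: conv_assoc)
    also have "\<dots> = conv P (conv P ?T ?Z) (mu P) c w"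
      by (rule conv_cong) (auto simp: ivl_def cP comm)
    also have "\<dots> = conv P ?T (conv P ?Z (mu P)) c w" by (simp add: conv_assoc)
    also have "\<dots> = conv P ?T one c w"
      by (rule conv_cong) (auto simp: ivl_def w mu_L)
    also have "\<dots> = ?T c w" using conv_one_right[OF w cP(2)] .
    finally show ?thesis .
  qed
  have "conv P ?T (mu P) u w = conv P one (conv P ?T (mu P)) u w"
    using conv_one_left[OF u uw] by simp
  also have "\<dots> = conv P (conv P (mu P) ?Z) (conv P ?T (mu P)) u w"
    by (rule conv_cong) (auto simp: ivl_def u mu_R)
  also have "\<dots> = conv P (mu P) (conv P ?Z (conv P ?T (mu P))) u w"
    by (simp add: conv_assoc)
  also have "\<dots> = conv P (mu P) ?T u w"
    by (rule conv_cong) (auto simp: inner)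
  finally show ?thesis by simp
qed

lemma main_zero:
  fixes P :: "'c::finite set set" and sg :: "'c set \<Rightarrow> int"
  assumes par: "\<And>u w. u \<in> P \<Longrightarrow> w \<in> P \<Longrightarrow> u \<subseteq> w \<Longrightarrow> sg u \<noteq> sg w \<Longrightarrow> (\<Sum>c\<in>ivl P u w. sg c) = 0"
    and sq: "\<And>c. sg c * sg c = 1"
    and b: "b \<in> P" and t: "t \<in> P" and bot: "\<And>c. c \<in> P \<Longrightarrow> b \<subseteq> c"
    and top: "\<And>c. c \<in> P \<Longrightarrow> c \<subseteq> t" and bt: "b \<noteq> t"
  shows "(\<Sum>y\<in>P. \<Sum>x\<in>{x\<in>P. x \<subseteq> y}. \<Sum>z\<in>{z\<in>P. y \<subseteq> z}.
            mu P x y * mu P y z * (sg x * sg y * sg z)) = 0"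
proof -
  let ?Z = "\<lambda>_ _. 1::int"
  let ?T = "\<lambda>a b. sg a * sg b"
  let ?S = "\<lambda>a z. sg z"
  define H where "H y = conv P ?S (mu P) y t" for y
  have ivb: "ivl P b y = {x\<in>P. x \<subseteq> y}" for y using bot unfolding ivl_def by auto
  have ivt: "ivl P y t = {z\<in>P. y \<subseteq> z}" for y using top unfolding ivl_def by auto
  have ivbt: "ivl P b t = P" using bot top unfolding ivl_def by auto
  have zsum: "(\<Sum>z\<in>{z\<in>P. y \<subseteq> z}. mu P y z * sg z) = sg t * sg y * H y" if y: "y \<in> P" for y
  proof -
    have "(\<Sum>z\<in>{z\<in>P. y \<subseteq> z}. mu P y z * sg z) = sg t * conv P (mu P) ?T y t"
      unfolding conv_def ivt[symmetric] sum_distrib_left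
      by (intro sum.cong refl) (metis (no_types, lifting) mult.assoc mult.left_commute mult_1_right sq)
    also have "\<dots> = sg t * conv P ?T (mu P) y t"
      using comm_mu[OF par y t top[OF y]] by simp
    also have "\<dots> = sg t * sg y * H y"
      unfolding H_def conv_def by (simp add: sum_distrib_left mult.assoc)
    finally show ?thesis .
  qed
  have step1: "(\<Sum>x\<in>{x\<in>P. x \<subseteq> y}. \<Sum>z\<in>{z\<in>P. y \<subseteq> z}. mu P x y * mu P y z * (sg x * sg y * sg z))
      = sg t * ((\<Sum>x\<in>{x\<in>P. x \<subseteq> y}. sg x * mu P x y) * H y)" if y: "y \<in> P" for y
  proof -
    have "(\<Sum>x\<in>{x\<in>P. x \<subseteq> y}. \<Sum>z\<in>{z\<in>P. y \<subseteq> z}. mu P x y * mu P y z * (sg x * sg y * sg z))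
       = (\<Sum>x\<in>{x\<in>P. x \<subseteq> y}. sg x * mu P x y) * sg y * (\<Sum>z\<in>{z\<in>P. y \<subseteq> z}. mu P y z * sg z)"
      by (simp add: sum_distrib_left sum_distrib_right algebra_simps)
    also have "\<dots> = (\<Sum>x\<in>{x\<in>P. x \<subseteq> y}. sg x * mu P x y) * (sg y * sg y) * sg t * H y"
      using zsum[OF y] by (simp add: algebra_simps)
    also have "\<dots> = sg t * ((\<Sum>x\<in>{x\<in>P. x \<subseteq> y}. sg x * mu P x y) * H y)"
      using sq by (simp add: algebra_simps)
    finally show ?thesis .
  qed
  have inner: "conv P (mu P) (\<lambda>y _. H y) x t = sg x * mu P x t" if x: "x \<in> P" for x
  proof -
    have xt: "x \<subseteq> t" using top x by simp
    have "conv P (mu P) (\<lambda>y _. H y) x t = conv P (mu P) (conv P ?S (mu P)) x t"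
      unfolding H_def by (rule conv_cong) auto
    also have "\<dots> = conv P (conv P (mu P) ?S) (mu P) x t" by (simp add: conv_assoc)
    also have "\<dots> = conv P (\<lambda>a z. sg z * one a z) (mu P) x t"
    proof (rule conv_cong)
      fix c assume c: "c \<in> ivl P x t"
      have "conv P (mu P) ?S x c = sg c * conv P (mu P) ?Z x c"
        unfolding conv_def by (simp add: sum_distrib_left mult.commute)
      also have "\<dots> = sg c * one x c" using mu_R[OF x] c by (simp add: ivl_def)
      finally show "conv P (mu P) ?S x c = sg c * one x c" .
    qed simp
    also have "\<dots> = (\<Sum>c\<in>ivl P x t. if c = x then sg x * mu P x t else 0)"
      unfolding conv_def one_def by (intro sum.cong refl) auto
    also have "\<dots> = sg x * mu P x t"
      using x xt by (simp add: ivl_def)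
    finally show ?thesis .
  qed
  have "(\<Sum>y\<in>P. \<Sum>x\<in>{x\<in>P. x \<subseteq> y}. \<Sum>z\<in>{z\<in>P. y \<subseteq> z}.
            mu P x y * mu P y z * (sg x * sg y * sg z))
      = sg t * (\<Sum>y\<in>P. (\<Sum>x\<in>{x\<in>P. x \<subseteq> y}. sg x * mu P x y) * H y)"
    using step1 by (simp add: sum_distrib_left)
  also have "\<dots> = sg t * conv P (conv P ?S (mu P)) (\<lambda>y _. H y) b t"
    unfolding conv_def ivbt unfolding ivb by simp
  also have "\<dots> = sg t * conv P ?S (conv P (mu P) (\<lambda>y _. H y)) b t"
    by (simp add: conv_assoc)
  also have "\<dots> = sg t * conv P ?Z (mu P) b t"
  proof -
    have eqx: "sg x * conv P (mu P) (\<lambda>y _. H y) x t = 1 * mu P x t" if "x \<in> ivl P b t" for x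
    proof -
      have x: "x \<in> P" using that by (simp add: ivl_def)
      show ?thesis using inner[OF x] sq[of x] by (simp add: mult.assoc[symmetric])
    qed
    have "conv P ?S (conv P (mu P) (\<lambda>y _. H y)) b t = conv P ?Z (mu P) b t"
      unfolding conv_def[of P ?S "conv P (mu P) (\<lambda>y _. H y)"] conv_def[of P ?Z "mu P"]
      by (intro sum.cong refl) (use eqx in auto)
    then show ?thesis by simp
  qed
  also have "\<dots> = 0" using mu_L[OF b t bot[OF t]] bt by (simp add: one_def)
  finally show ?thesis .
qed



definition Jmu :: "'c::finite set set \<Rightarrow> 'c set \<Rightarrow> 'c set \<Rightarrow> 'c set \<Rightarrow> int" where
  "Jmu P x y z = (if x \<in> P \<and> y \<in> P \<and> z \<in> P \<and> x \<subseteq> y \<and> y \<subseteq> z then mu P x y * mu P y z else 0)"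

lemma pairs_eq:
  "{(a,b). a \<in> P \<and> b \<in> P \<and> x \<subseteq> a \<and> a \<subseteq> y \<and> y \<subseteq> b \<and> b \<subseteq> z} = ivl P x y \<times> ivl P y z"
  unfolding ivl_def by auto

lemma Jmu_eq:
  fixes P :: "'c::finite set set"
  assumes "x \<in> P" "y \<in> P" "z \<in> P" "x \<subseteq> y" "y \<subseteq> z"
  shows "(\<Sum>(a,b)\<in>{(a,b). a \<in> P \<and> b \<in> P \<and> x \<subseteq> a \<and> a \<subseteq> y \<and> y \<subseteq> b \<and> b \<subseteq> z}. Jmu P a y b)
     = delta3 x y z"
proof -
  have "(\<Sum>(a,b)\<in>{(a,b). a \<in> P \<and> b \<in> P \<and> x \<subseteq> a \<and> a \<subseteq> y \<and> y \<subseteq> b \<and> b \<subseteq> z}. Jmu P a y b)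
      = (\<Sum>(a,b)\<in>ivl P x y \<times> ivl P y z. mu P a y * mu P y b)"
    unfolding pairs_eq using assms by (intro sum.cong refl) (auto simp: Jmu_def ivl_def)
  also have "\<dots> = (\<Sum>a\<in>ivl P x y. mu P a y) * (\<Sum>b\<in>ivl P y z. mu P y b)"
    by (simp add: sum_product sum.cartesian_product)
  also have "\<dots> = one x y * one y z"
    using mu_L[of x P y] mu_R[of y P z] assms unfolding conv_def by simp
  also have "\<dots> = delta3 x y z" unfolding one_def delta3_def by auto
  finally show ?thesis .
qed

lemma Jfun_eq:
  fixes P :: "'c::finite set set"
  shows "Jfun P (\<subseteq>) = Jmu P"
  unfolding Jfun_def
proof (rule the_equality)
  show "(\<forall>x\<in>P. \<forall>y\<in>P. \<forall>z\<in>P. x \<subseteq> y \<and> y \<subseteq> z \<longrightarrow>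
        (\<Sum>(a,b)\<in>{(a,b). a \<in> P \<and> b \<in> P \<and> x \<subseteq> a \<and> a \<subseteq> y \<and> y \<subseteq> b \<and> b \<subseteq> z}. Jmu P a y b) = delta3 x y z) \<and>
     (\<forall>x y z. \<not> (x \<in> P \<and> y \<in> P \<and> z \<in> P \<and> x \<subseteq> y \<and> y \<subseteq> z) \<longrightarrow> Jmu P x y z = 0)"
    apply (intro conjI)
    subgoal using Jmu_eq by blast
    subgoal by (auto simp: Jmu_def)
    done
next
  fix J
  assume J: "(\<forall>x\<in>P. \<forall>y\<in>P. \<forall>z\<in>P. x \<subseteq> y \<and> y \<subseteq> z \<longrightarrow>
        (\<Sum>(a,b)\<in>{(a,b). a \<in> P \<and> b \<in> P \<and> x \<subseteq> a \<and> a \<subseteq> y \<and> y \<subseteq> b \<and> b \<subseteq> z}. J a y b) = delta3 x y z) \<and>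
     (\<forall>x y z. \<not> (x \<in> P \<and> y \<in> P \<and> z \<in> P \<and> x \<subseteq> y \<and> y \<subseteq> z) \<longrightarrow> J x y z = 0)"
  have main: "\<forall>x y z. card (z - x) = n \<longrightarrow> x \<in> P \<longrightarrow> y \<in> P \<longrightarrow> z \<in> P \<longrightarrow> x \<subseteq> y \<longrightarrow> y \<subseteq> z
      \<longrightarrow> J x y z = Jmu P x y z" for n
  proof (induction n rule: less_induct)
    case (less n)
    show ?case
    proof (intro allI impI)
      fix x y z assume n: "card (z - x) = n" and xyz: "x \<in> P" "y \<in> P" "z \<in> P" "x \<subseteq> y" "y \<subseteq> z"
      define S where "S = {(a,b). a \<in> P \<and> b \<in> P \<and> x \<subseteq> a \<and> a \<subseteq> y \<and> y \<subseteq> b \<and> b \<subseteq> z}"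
      have fS: "finite S" by simp
      have xz: "(x,z) \<in> S" using xyz unfolding S_def by auto
      have rest: "J a y b = Jmu P a y b" if ab: "(a,b) \<in> S - {(x,z)}" for a b
      proof -
        have ab': "a \<in> P" "b \<in> P" "x \<subseteq> a" "a \<subseteq> y" "y \<subseteq> b" "b \<subseteq> z" "(a,b) \<noteq> (x,z)"
          using ab unfolding S_def by auto
        have "b - a \<subset> z - x"
        proof
          show "b - a \<subseteq> z - x" using ab' by auto
          show "b - a \<noteq> z - x"
          proof
            assume eq: "b - a = z - x"
            have "a = x"
            proof (rule ccontr)
              assume "a \<noteq> x"
              then obtain e where e: "e \<in> a" "e \<notin> x" using ab'(3) by blast
              then have "e \<in> z - x" using ab'(4) xyz(5) by blast
              then have "e \<in> b - a" using eq by simp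
              then show False using e by simp
            qed
            moreover have "b = z"
            proof (rule ccontr)
              assume "b \<noteq> z"
              then obtain e where e: "e \<in> z" "e \<notin> b" using ab'(6) by blast
              then have "e \<in> z - x" using ab'(3) ab'(4) ab'(5) by blast
              then have "e \<in> b - a" using eq by simp
              then show False using e by simp
            qed
            ultimately show False using ab'(7) by simp
          qed
        qed
        then have "card (b - a) < card (z - x)" by (intro psubset_card_mono) simp_all
        then have "card (b - a) < n" using n by simp
        then have IH: "\<forall>x y z. card (z - x) = card (b - a) \<longrightarrow> x \<in> P \<longrightarrow> y \<in> P \<longrightarrow> z \<in> P \<longrightarrow> x \<subseteq> y \<longrightarrow> y \<subseteq> z
          \<longrightarrow> J x y z = Jmu P x y z" by (rule less.IH)
        show ?thesis using IH[rule_format, of b a y] ab' xyz(2) by simp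
      qed
      have J1: "\<forall>x\<in>P. \<forall>y\<in>P. \<forall>z\<in>P. x \<subseteq> y \<and> y \<subseteq> z \<longrightarrow>
        (\<Sum>(a,b)\<in>{(a,b). a \<in> P \<and> b \<in> P \<and> x \<subseteq> a \<and> a \<subseteq> y \<and> y \<subseteq> b \<and> b \<subseteq> z}. J a y b) = delta3 x y z"
        using J by (rule conjunct1)
      have "(\<Sum>(a,b)\<in>S. J a y b) = delta3 x y z"
        unfolding S_def using J1[rule_format, OF xyz(1,2,3)] xyz(4,5) by simp
      moreover have "(\<Sum>(a,b)\<in>S. Jmu P a y b) = delta3 x y z" using Jmu_eq[OF xyz] unfolding S_def .
      moreover have "(\<Sum>(a,b)\<in>S. J a y b) = J x y z + (\<Sum>(a,b)\<in>S - {(x,z)}. J a y b)"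
        using sum.remove[OF fS xz, of "\<lambda>(a,b). J a y b"] by simp
      moreover have "(\<Sum>(a,b)\<in>S. Jmu P a y b) = Jmu P x y z + (\<Sum>(a,b)\<in>S - {(x,z)}. Jmu P a y b)"
        using sum.remove[OF fS xz, of "\<lambda>(a,b). Jmu P a y b"] by simp
      moreover have "(\<Sum>(a,b)\<in>S - {(x,z)}. J a y b) = (\<Sum>(a,b)\<in>S - {(x,z)}. Jmu P a y b)"
        using rest by (intro sum.cong refl) auto
      ultimately show "J x y z = Jmu P x y z" by simp
    qed
  qed
  show "J = Jmu P"
  proof (intro ext)
    fix x y z
    show "J x y z = Jmu P x y z"
    proof (cases "x \<in> P \<and> y \<in> P \<and> z \<in> P \<and> x \<subseteq> y \<and> y \<subseteq> z")
      case True then show ?thesis using main by blast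
    next
      case False
      have "J x y z = 0" using conjunct2[OF J] False by blast
      moreover have "Jmu P x y z = 0" using False unfolding Jmu_def by (rule if_not_P)
      ultimately show ?thesis by simp
    qed
  qed
qed

lemma triple_sum:
  fixes P :: "'c::finite set set" and F :: "'c set \<Rightarrow> 'c set \<Rightarrow> 'c set \<Rightarrow> int"
  shows "(\<Sum>(x,y,z)\<in>{(x,y,z). x \<in> P \<and> y \<in> P \<and> z \<in> P \<and> x \<subseteq> y \<and> y \<subseteq> z}. F x y z)
       = (\<Sum>y\<in>P. \<Sum>x\<in>{x\<in>P. x \<subseteq> y}. \<Sum>z\<in>{z\<in>P. y \<subseteq> z}. F x y z)"
proof -
  have "(\<Sum>y\<in>P. \<Sum>x\<in>{x\<in>P. x \<subseteq> y}. \<Sum>z\<in>{z\<in>P. y \<subseteq> z}. F x y z)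
      = (\<Sum>y\<in>P. \<Sum>p\<in>{x\<in>P. x \<subseteq> y} \<times> {z\<in>P. y \<subseteq> z}. F (fst p) y (snd p))"
    by (simp add: sum.cartesian_product split_def)
  also have "\<dots> = (\<Sum>q\<in>(SIGMA y:P. {x\<in>P. x \<subseteq> y} \<times> {z\<in>P. y \<subseteq> z}). F (fst (snd q)) (fst q) (snd (snd q)))"
    by (simp add: sum.Sigma split_def)
  also have "\<dots> = (\<Sum>(x,y,z)\<in>{(x,y,z). x \<in> P \<and> y \<in> P \<and> z \<in> P \<and> x \<subseteq> y \<and> y \<subseteq> z}. F x y z)"
    by (rule sum.reindex_bij_witness[where i = "\<lambda>(x,y,z). (y,x,z)" and j = "\<lambda>(y,x,z). (x,y,z)"]) auto
  finally show ?thesis by simp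
qed

lemma Mpoly_zero:
  fixes P :: "'c::finite set set" and rk :: "'c set \<Rightarrow> nat"
  assumes par: "\<And>u w. u \<in> P \<Longrightarrow> w \<in> P \<Longrightarrow> u \<subseteq> w \<Longrightarrow> (-1::int) ^ rk u \<noteq> (-1) ^ rk w
        \<Longrightarrow> (\<Sum>c\<in>ivl P u w. (-1::int) ^ rk c) = 0"
    and b: "b \<in> P" and t: "t \<in> P" and bot: "\<And>c. c \<in> P \<Longrightarrow> b \<subseteq> c"
    and top: "\<And>c. c \<in> P \<Longrightarrow> c \<subseteq> t" and bt: "b \<noteq> t"
  shows "Mpoly P (\<subseteq>) rk (-1::int) = 0"
proof -
  define sg where "sg c = (-1::int) ^ rk c" for c
  define r where "r = maxrank P rk"
  have sq: "sg c * sg c = 1" for c unfolding sg_def by (simp add: power_mult_distrib[symmetric])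
  have rkle: "rk c \<le> r" if "c \<in> P" for c
    unfolding r_def maxrank_def using that by (simp add: Max_ge)
  have pw: "(-1::int) ^ nat (rho P rk x y z) = (-1) ^ (3 * r) * (sg x * sg y * sg z)"
    if "x \<in> P" "y \<in> P" "z \<in> P" for x y z
  proof -
    have "nat (rho P rk x y z) + rk x + rk y + rk z = 3 * r"
      unfolding rho_def r_def[symmetric] using rkle[OF that(1)] rkle[OF that(2)] rkle[OF that(3)] by simp
    then have "(-1::int) ^ (3 * r) = (-1) ^ nat (rho P rk x y z) * (sg x * sg y * sg z)"
      unfolding sg_def by (metis power_add mult.assoc)
    then have "(-1::int) ^ (3 * r) * (sg x * sg y * sg z) = (-1) ^ nat (rho P rk x y z) * ((sg x * sg x) * (sg y * sg y) * (sg z * sg z))"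
      by (simp add: algebra_simps)
    then show ?thesis using sq by simp
  qed
  have "Mpoly P (\<subseteq>) rk (-1::int) =
     (\<Sum>(x,y,z)\<in>{(x,y,z). x \<in> P \<and> y \<in> P \<and> z \<in> P \<and> x \<subseteq> y \<and> y \<subseteq> z}.
        (-1) ^ (3 * r) * (mu P x y * mu P y z * (sg x * sg y * sg z)))"
    unfolding Mpoly_def Jfun_eq by (intro sum.cong refl) (auto simp: Jmu_def pw)
  also have "\<dots> = (-1) ^ (3 * r) * (\<Sum>(x,y,z)\<in>{(x,y,z). x \<in> P \<and> y \<in> P \<and> z \<in> P \<and> x \<subseteq> y \<and> y \<subseteq> z}.
        mu P x y * mu P y z * (sg x * sg y * sg z))"
    by (simp add: sum_distrib_left split_def)
  also have "\<dots> = (-1) ^ (3 * r) * (\<Sum>y\<in>P. \<Sum>x\<in>{x\<in>P. x \<subseteq> y}. \<Sum>z\<in>{z\<in>P. y \<subseteq> z}.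
            mu P x y * mu P y z * (sg x * sg y * sg z))"
    by (simp only: triple_sum)
  also have "\<dots> = 0"
    using main_zero[of P sg, OF _ sq b t bot top bt] par unfolding sg_def by simp
  finally show ?thesis .
qed


theorem proposition6p15:
  "Mpoly (subspace_lattice :: ('a::{field,finite} ^ 'n) set set) (\<subseteq>) vec.dim (-1 :: int) = 0"
proof (rule Mpoly_zero)
  let ?P = "subspace_lattice :: ('a::{field,finite} ^ 'n) set set"
  show "{0} \<in> ?P" unfolding subspace_lattice_def by (simp add: vec.subspace_0 vec.subspace_single_0)
  show "UNIV \<in> ?P" unfolding subspace_lattice_def by simp
  show "\<And>c. c \<in> ?P \<Longrightarrow> {0} \<subseteq> c" unfolding subspace_lattice_def by (simp add: vec.subspace_0)
  show "\<And>c. c \<in> ?P \<Longrightarrow> c \<subseteq> UNIV" by simp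
  show "{0} \<noteq> (UNIV :: ('a^'n) set)"
  proof
    assume h: "{0} = (UNIV :: ('a^'n) set)"
    have "axis undefined (1::'a) \<in> (UNIV :: ('a^'n) set)" by simp
    then have "axis undefined (1::'a) = (0::'a^'n)" using h by blast
    then have "(axis undefined (1::'a) :: 'a^'n) $ undefined = 0" by simp
    then show False by (simp add: axis_def)
  qed
  fix u w :: "('a^'n) set"
  assume u: "u \<in> ?P" and w: "w \<in> ?P" and uw: "u \<subseteq> w"
    and par: "(-1::int) ^ vec.dim u \<noteq> (-1) ^ vec.dim w"
  have "ivl ?P u w = betw u w" unfolding ivl_def betw_def subspace_lattice_def by auto
  then show "(\<Sum>c\<in>ivl ?P u w. (-1::int) ^ vec.dim c) = 0"
    using parity_sum[of u w] u w uw par unfolding subspace_lattice_def by simp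
qed

end
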